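(* Let $\Sigma$ be a finite nonempty set and let $\{(A_i,B_i)\in\mathbb{R}^{n\times n}\times\mathbb{R}^{n\times m} : i\in\Sigma\}$ be given. The switched control system $x(k+1)=A_{\sigma(k)}x(k)+B_{\sigma(k)}u(k)$ is mode-dependent feedback stabilizable (DFS) if and only if it is current-mode-dependent memory-feedback stabilizable (DFS$_m$).
   Context: Let $\Sigma$ be a finite nonempty set (alphabet) and $\{(A_i,B_i)\in\mathbb{R}^{n\times n}\times\mathbb{R}^{n\times m} : i\in\Sigma\}$. Consider the discrete-time switched control system $x(k+1)=A_{\sigma(k)}x(k)+B_{\sigma(k)}u(k)$, $k\in\mathbb{N}=\{0,1,2,\dots\}$, where the switching signal $\sigma:\mathbb{N}\to\Sigma$ is arbitrary (the set of all such signals is denoted $\Sigma^\omega$) and $u(k)\in\mathbb{R}^m$ is the control. $\|\cdot\|$ is the Euclidean norm. Let $\mathcal{H}$ be the set of all tuples $(x_k,\dots,x_0;\,i_k,\dots,i_0)$ with $k\in\mathbb{N}$, $x_j\in\mathbb{R}^n$, $i_j\in\Sigma$ (state string and mode string of equal length $k+1$), and let $\mathcal{H}_-$ be the set of all tuples $(x_k,\dots,x_0;\,i_{k-1},\dots,i_0)$ with $k\in\mathbb{N}$ (mode string one shorter than the state string; empty when $k=0$). Controllers are arbitrary functions (no regularity assumed) of the following kinds, each determining, for every $x_0\in\mathbb{R}^n$ and $\sigma\in\Sigma^\omega$, a unique closed-loop trajectory with $x(0)=x_0$: (1) static mode-independent $\Phi:\mathbb{R}^n\to\mathbb{R}^m$,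 with $u(k)=\Phi(x(k))$; (1)$^d$ static mode-dependent $\Phi_d:\Sigma\times\mathbb{R}^n\to\mathbb{R}^m$, with $u(k)=\Phi_d(\sigma(k),x(k))$; (2) current-mode-independent with memory $\Psi:\mathcal{H}_-\to\mathbb{R}^m$, with $u(k)=\Psi(x(k),\dots,x(0);\,\sigma(k-1),\dots,\sigma(0))$; (2)$^d$ current-mode-dependent with memory $\Psi_d:\mathcal{H}\to\mathbb{R}^m$, with $u(k)=\Psi_d(x(k),\dots,x(0);\,\sigma(k),\dots,\sigma(0))$. The closed loop is uniformly exponentially stable (UES) if there exist $M>0$ and $\gamma\in[0,1)$ such that $\|x(k)\|\le M\gamma^k\|x_0\|$ for all $x_0\in\mathbb{R}^n$, all $\sigma\in\Sigma^\omega$ and all $k\in\mathbb{N}$. The system is called IFS, DFS, IFS$_m$, DFS$_m$ if there exists a controller of kind (1), (1)$^d$, (2), (2)$^d$ respectively such that the closed loop is UES. *)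

theory Defs
  imports "HOL-Analysis.Analysis"
begin

text \<open>Modes: a finite (nonempty, as every type) type 'i.  States: real^'n, controls: real^'m.
  A i :: real^'n^'n (n x n), B i :: real^'m^'n (n x m), so A i *v x, B i *v u :: real^'n.\<close>

primrec traj_static ::
  "('i \<Rightarrow> real^'n^'n) \<Rightarrow> ('i \<Rightarrow> real^'m^'n) \<Rightarrow> ('i \<Rightarrow> real^'n \<Rightarrow> real^'m)
   \<Rightarrow> real^'n \<Rightarrow> (nat \<Rightarrow> 'i) \<Rightarrow> nat \<Rightarrow> real^'n" where
  "traj_static A B Phi x0 \<sigma> 0 = x0"
| "traj_static A B Phi x0 \<sigma> (Suc k) =
     A (\<sigma> k) *v traj_static A B Phi x0 \<sigma> k
     + B (\<sigma> k) *v Phi (\<sigma> k) (traj_static A B Phi x0 \<sigma> k)"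

text \<open>Closed-loop state history [x(k), ..., x(0)] (most recent first) under a
  current-mode-dependent memory controller Psi_d, which receives the state string
  x(k),...,x(0) and the mode string sigma(k),...,sigma(0) (both most recent first).\<close>
primrec hist_mem ::
  "('i \<Rightarrow> real^'n^'n) \<Rightarrow> ('i \<Rightarrow> real^'m^'n) \<Rightarrow> ((real^'n) list \<Rightarrow> 'i list \<Rightarrow> real^'m)
   \<Rightarrow> real^'n \<Rightarrow> (nat \<Rightarrow> 'i) \<Rightarrow> nat \<Rightarrow> (real^'n) list" where
  "hist_mem A B Psi x0 \<sigma> 0 = [x0]"
| "hist_mem A B Psi x0 \<sigma> (Suc k) =
     (let h = hist_mem A B Psi x0 \<sigma> k
      in (A (\<sigma> k) *v hd h + B (\<sigma> k) *v Psi h (map \<sigma> (rev [0..<Suc k]))) # h)"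

definition traj_mem ::
  "('i \<Rightarrow> real^'n^'n) \<Rightarrow> ('i \<Rightarrow> real^'m^'n) \<Rightarrow> ((real^'n) list \<Rightarrow> 'i list \<Rightarrow> real^'m)
   \<Rightarrow> real^'n \<Rightarrow> (nat \<Rightarrow> 'i) \<Rightarrow> nat \<Rightarrow> real^'n" where
  "traj_mem A B Psi x0 \<sigma> k = hd (hist_mem A B Psi x0 \<sigma> k)"

definition UES :: "(real^'n \<Rightarrow> (nat \<Rightarrow> 'i) \<Rightarrow> nat \<Rightarrow> real^'n) \<Rightarrow> bool" where
  "UES X \<longleftrightarrow> (\<exists>M::real. M > 0 \<and> (\<exists>\<gamma>::real. 0 \<le> \<gamma> \<and> \<gamma> < 1 \<and>
     (\<forall>x0 \<sigma> k. norm (X x0 \<sigma> k) \<le> M * \<gamma> ^ k * norm x0)))"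

definition DFS :: "('i \<Rightarrow> real^'n^'n) \<Rightarrow> ('i \<Rightarrow> real^'m^'n) \<Rightarrow> bool" where
  "DFS A B \<longleftrightarrow> (\<exists>Phi. UES (traj_static A B Phi))"

definition DFS_m :: "('i \<Rightarrow> real^'n^'n) \<Rightarrow> ('i \<Rightarrow> real^'m^'n) \<Rightarrow> bool" where
  "DFS_m A B \<longleftrightarrow> (\<exists>Psi. UES (traj_mem A B Psi))"

end

theory Submission
  imports Defs
begin

lemma hist_ne: "hist_mem A B Psi x0 \<sigma> k \<noteq> []"
  by (cases k) (auto simp: Let_def)

lemma easy_dir:
  "traj_mem A B (\<lambda>h ms. Phi (hd ms) (hd h)) x0 \<sigma> k = traj_static A B Phi x0 \<sigma> k"
proof (induction k)
  case 0
  then show ?case by (simp add: traj_mem_def)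
next
  case (Suc k)
  have e: "hd (map \<sigma> (rev [0..<Suc k])) = \<sigma> k" by simp
  show ?case using Suc e by (simp add: traj_mem_def Let_def del: upt_Suc)
qed

lemma map_shift:
  "map (\<lambda>n. if n = 0 then i else \<sigma>' (n - 1)) (rev [0..<Suc n]) = map \<sigma>' (rev [0..<n]) @ [i]"
  by (induction n) auto

lemma hist_shift:
  fixes \<psi> :: "(real^'n) list \<Rightarrow> 'i list \<Rightarrow> real^'m"
  shows "hist_mem A B \<psi> x (\<lambda>n. if n = 0 then i else \<sigma>' (n - 1)) (Suc k)
       = hist_mem A B (\<lambda>h ms. \<psi> (h @ [x]) (ms @ [i])) (A i *v x + B i *v \<psi> [x] [i]) \<sigma>' k @ [x]"
proof (induction k)
  case 0
  then show ?case by (simp add: Let_def)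
next
  case (Suc k)
  let ?s = "\<lambda>n. if n = 0 then i else \<sigma>' (n - 1)"
  have ne: "hist_mem A B (\<lambda>h ms. \<psi> (h @ [x]) (ms @ [i])) (A i *v x + B i *v \<psi> [x] [i]) \<sigma>' k \<noteq> []" by (rule hist_ne)
  have m: "map ?s (rev [0..<Suc (Suc k)]) = map \<sigma>' (rev [0..<Suc k]) @ [i]"
    by (rule map_shift)
  show ?case
    apply (subst hist_mem.simps(2))
    apply (subst Suc)
    apply (subst m)
    using ne by (simp add: Let_def del: upt_Suc)
qed

definition G where
  "G A B lam x c \<longleftrightarrow> (\<exists>\<psi>. \<forall>\<sigma> k. norm (traj_mem A B \<psi> x \<sigma> k) \<le> c * lam ^ k)"

lemma G_step:
  assumes "G A B lam x c"
  shows "\<exists>u. G A B lam (A i *v x + B i *v u) (lam * c)"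
proof -
  obtain \<psi> where p: "\<And>\<sigma> k. norm (traj_mem A B \<psi> x \<sigma> k) \<le> c * lam ^ k"
    using assms G_def by blast
  show ?thesis
  proof (intro exI[of _ "\<psi> [x] [i]"], unfold G_def, intro exI[of _ "\<lambda>h ms. \<psi> (h @ [x]) (ms @ [i])"] allI)
    fix \<sigma>' k
    have "traj_mem A B (\<lambda>h ms. \<psi> (h @ [x]) (ms @ [i])) (A i *v x + B i *v \<psi> [x] [i]) \<sigma>' k
        = traj_mem A B \<psi> x (\<lambda>n. if n = 0 then i else \<sigma>' (n - 1)) (Suc k)"
      unfolding traj_mem_def hist_shift using hist_ne by (metis hd_append)
    also have "norm \<dots> \<le> c * lam ^ Suc k" by (rule p)
    finally show "norm (traj_mem A B (\<lambda>h ms. \<psi> (h @ [x]) (ms @ [i])) (A i *v x + B i *v \<psi> [x] [i]) \<sigma>' k) \<le> lam * c * lam ^ k"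
      by (simp add: algebra_simps)
  qed
qed

lemma G_ge: "G A B lam x c \<Longrightarrow> norm x \<le> c"
  unfolding G_def by (metis hist_mem.simps(1) list.sel(1) mult.right_neutral power_0 traj_mem_def)

lemma hard_dir:
  fixes A :: "'i \<Rightarrow> real^'n^'n" and B :: "'i \<Rightarrow> real^'m^'n"
  assumes "DFS_m A B" shows "DFS A B"
proof -
  obtain Psi M \<gamma> where M: "M > 0" and g: "0 \<le> \<gamma>" "\<gamma> < 1"
    and b: "\<And>x0 \<sigma> k. norm (traj_mem A B Psi x0 \<sigma> k) \<le> M * \<gamma> ^ k * norm x0"
    using assms unfolding DFS_m_def UES_def by blast
  define lam where "lam = (1 + \<gamma>) / 2"
  define mu where "mu = (1 + lam) / 2"
  have l: "0 < lam" "lam < 1" "\<gamma> \<le> lam" using g by (auto simp: lam_def)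
  have mu: "lam < mu" "mu < 1" "0 < mu" using l by (auto simp: mu_def)
  define V where "V x = Inf {c. G A B lam x c}" for x
  have Gi: "G A B lam x (M * norm x)" for x
    unfolding G_def
  proof (intro exI[of _ Psi] allI)
    fix \<sigma> k
    have "M * \<gamma> ^ k * norm x \<le> M * lam ^ k * norm x"
      using M g l by (intro mult_right_mono mult_left_mono power_mono) auto
    then show "norm (traj_mem A B Psi x \<sigma> k) \<le> M * norm x * lam ^ k"
      using b[of x \<sigma> k] by (simp add: algebra_simps)
  qed
  have bdd: "bdd_below {c. G A B lam x c}" for x
    using G_ge by (auto intro!: bdd_belowI)
  have Vle: "G A B lam x c \<Longrightarrow> V x \<le> c" for x c
    unfolding V_def using bdd by (intro cInf_lower) auto
  have Vge: "norm x \<le> V x" for x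
    unfolding V_def using Gi G_ge by (intro cInf_greatest) auto
  have VM: "V x \<le> M * norm x" for x using Vle Gi by blast
  have step: "\<exists>u. V (A i *v x + B i *v u) \<le> mu * V x" for i x
  proof (cases "V x = 0")
    case True
    then have "x = 0" using Vge[of x] by simp
    then have "V (A i *v x + B i *v 0) \<le> 0" using VM[of 0] by simp
    then show ?thesis using True by (intro exI[of _ 0]) simp
  next
    case False
    then have pos: "V x > 0" using Vge[of x] norm_ge_zero[of x] by linarith
    have "V x < mu * V x / lam" using pos l mu by (simp add: field_simps)
    then obtain c where c: "G A B lam x c" "c < mu * V x / lam"
      unfolding V_def using Gi by (metis (no_types, lifting) cInf_lessD empty_iff mem_Collect_eq)
    obtain u where "G A B lam (A i *v x + B i *v u) (lam * c)" using G_step[OF c(1)] by blast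
    then have "V (A i *v x + B i *v u) \<le> lam * c" by (rule Vle)
    also have "\<dots> \<le> mu * V x" using c(2) l by (simp add: field_simps)
    finally show ?thesis by blast
  qed
  define Phi where "Phi i x = (SOME u. V (A i *v x + B i *v u) \<le> mu * V x)" for i x
  have Phi: "V (A i *v x + B i *v Phi i x) \<le> mu * V x" for i x
    unfolding Phi_def using someI_ex[OF step] by blast
  have Vk: "V (traj_static A B Phi x0 \<sigma> k) \<le> mu ^ k * V x0" for x0 \<sigma> k
  proof (induction k)
    case 0 then show ?case by simp
  next
    case (Suc k)
    have "V (traj_static A B Phi x0 \<sigma> (Suc k)) \<le> mu * V (traj_static A B Phi x0 \<sigma> k)"
      using Phi by simp
    also have "\<dots> \<le> mu * (mu ^ k * V x0)" using Suc mu by (intro mult_left_mono) auto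
    finally show ?case by simp
  qed
  have "norm (traj_static A B Phi x0 \<sigma> k) \<le> M * mu ^ k * norm x0" for x0 \<sigma> k
  proof -
    have "norm (traj_static A B Phi x0 \<sigma> k) \<le> mu ^ k * V x0" using Vge Vk order.trans by blast
    also have "\<dots> \<le> mu ^ k * (M * norm x0)" using VM mu by (intro mult_left_mono) auto
    finally show ?thesis by (simp add: algebra_simps)
  qed
  then show ?thesis unfolding DFS_def UES_def using M mu
    by (intro exI[of _ Phi] exI[of _ M] conjI exI[of _ mu]) auto
qed

theorem theorem1:
  fixes A :: "'i::finite \<Rightarrow> real^'n^'n" and B :: "'i \<Rightarrow> real^'m^'n"
  shows "DFS A B \<longleftrightarrow> DFS_m A B"
proof
  assume "DFS A B"
  then obtain Phi where "UES (traj_static A B Phi)" unfolding DFS_def by blast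
  then have "UES (traj_mem A B (\<lambda>h ms. Phi (hd ms) (hd h)))"
    by (simp add: easy_dir[abs_def])
  then show "DFS_m A B" unfolding DFS_m_def by blast
next
  assume "DFS_m A B" then show "DFS A B" by (rule hard_dir)
qed

end
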